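(* Let $n\ge6$ be even and let $\varrho:G_n\to\mathcal L$ be a homomorphism. Then $\mathrm{Area}_n(p,q;\varrho)$ does not depend on the choice of $p,q\in\overline{\mathrm B}W$.
   Context: Let $W$ be a 2-dimensional complex vector space with a hermitian form $\langle\cdot,\cdot\rangle$ of signature $(+,-)$. In $\mathbb{CP}W$ let $\mathrm BW$ be the negative points (the Poincaré disc, curvature $-1$, oriented by its complex structure), $\mathrm SW$ the isotropic points, $\overline{\mathrm B}W=\mathrm BW\cup\mathrm SW$; $\mathcal L=\mathrm{PU}(W)$ is the group of orientation-preserving isometries of $\mathrm BW$. Oriented triangle area: $\mathrm{Area}\,\Delta(p_1,p_2,p_3)=2\arg(-\langle p_1,p_2\rangle\langle p_2,p_3\rangle\langle p_3,p_1\rangle)$ ($\arg\in[-\pi,\pi]$) if no two vertices are equal isotropic points, $0$ otherwise. $\mathrm{Area}(p_1,\dots,p_m):=\sum_{k=1}^m\mathrm{Area}\,\Delta(c,p_k,p_{k+1})$ (indices mod $m$), independent of $c\in\overline{\mathrm B}W$. $H_n$ is the group generated by $r_1,\dots,r_n$ with relations $r_i^2=1$, $r_n\cdots r_1=1$, indices mod $n$; for even $n$, $G_n\le H_n$ is the index-2 subgroup of words of even length in the $r_i$. Put $v_i:=r_i\cdots r_2r_1$ for $0\le i\le n-1$ ($v_0=1$); for $0\le i\le n-2$ put $w_i:=v_i$ if $i$ is even and $w_i:=v_ir_n$ if $i$ is odd, and $w_{i+n-1}:=r_nw_ir_n$; indices of the $w_i$ are mod $2n-2$; all $w_i\in G_n$.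 Write $w_ix$ for $\varrho(w_i)x$. Define $\mathrm{Area}_n(p,q;\varrho):=\mathrm{Area}(w_0p,w_1q,w_2p,w_3q,\dots,w_{2n-4}p,w_{2n-3}q)$ (the $2n-2$ points $w_jx_j$, with $x_j=p$ for even $j$ and $x_j=q$ for odd $j$). *)

theory Defs
  imports "HOL-Analysis.Analysis"
begin

text \<open>The hermitian space W is modelled as complex^2 with a form given by a
  hermitian matrix J: herm J u v = sum_{i,j} u_i J_ij conj(v_j)
  (linear in the first, conjugate-linear in the second argument).\<close>

definition herm :: "complex^2^2 \<Rightarrow> complex^2 \<Rightarrow> complex^2 \<Rightarrow> complex" where
  "herm J u v = (\<Sum>i\<in>UNIV. \<Sum>j\<in>UNIV. u$i * J$i$j * cnj (v$j))"

definition signature_pm :: "complex^2^2 \<Rightarrow> bool" where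
  "signature_pm J \<longleftrightarrow> (\<forall>i j. J$j$i = cnj (J$i$j)) \<and>
     (\<exists>e1 e2. herm J e1 e1 = 1 \<and> herm J e2 e2 = -1 \<and> herm J e1 e2 = 0)"

definition unitary_J :: "complex^2^2 \<Rightarrow> complex^2^2 \<Rightarrow> bool" where
  "unitary_J J U \<longleftrightarrow> (\<forall>x y. herm J (U *v x) (U *v y) = herm J x y)"

text \<open>Equality in PU(W): proportional matrices.\<close>
definition mat_prop :: "complex^2^2 \<Rightarrow> complex^2^2 \<Rightarrow> bool" where
  "mat_prop A B \<longleftrightarrow> (\<exists>c. c \<noteq> 0 \<and> (\<forall>i j. A$i$j = c * B$i$j))"

text \<open>Words [a1,...,ak] in the letters 1..n stand for r_a1 r_a2 ... r_ak.
  hequiv n is the congruence defining H_n (relations r_i^2 = 1 and r_n...r_1 = 1).\<close>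
inductive hequiv :: "nat \<Rightarrow> nat list \<Rightarrow> nat list \<Rightarrow> bool" for n :: nat where
  hrefl: "hequiv n w w"
| hsym: "hequiv n u v \<Longrightarrow> hequiv n v u"
| htrans: "hequiv n u v \<Longrightarrow> hequiv n v w \<Longrightarrow> hequiv n u w"
| hcancel: "i \<in> {1..n} \<Longrightarrow> hequiv n (u @ [i, i] @ v) (u @ v)"
| hrel: "hequiv n (u @ rev [1..<n+1] @ v) (u @ v)"

text \<open>Words representing elements of G_n (even length).\<close>
definition gword :: "nat \<Rightarrow> nat list \<Rightarrow> bool" where
  "gword n w \<longleftrightarrow> set w \<subseteq> {1..n} \<and> even (length w)"

text \<open>A homomorphism rho : G_n -> PU(W), given on words via unitary representatives.\<close>
definition proj_hom :: "complex^2^2 \<Rightarrow> nat \<Rightarrow> (nat list \<Rightarrow> complex^2^2) \<Rightarrow> bool" where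
  "proj_hom J n \<rho> \<longleftrightarrow>
     (\<forall>w. gword n w \<longrightarrow> unitary_J J (\<rho> w)) \<and>
     (\<forall>u v. gword n u \<longrightarrow> gword n v \<longrightarrow> mat_prop (\<rho> (u @ v)) (\<rho> u ** \<rho> v)) \<and>
     (\<forall>u v. gword n u \<longrightarrow> gword n v \<longrightarrow> hequiv n u v \<longrightarrow> mat_prop (\<rho> u) (\<rho> v))"

definition vword :: "nat \<Rightarrow> nat list" where
  "vword i = rev [1..<i+1]"

definition wbase :: "nat \<Rightarrow> nat \<Rightarrow> nat list" where
  "wbase n i = vword i @ (if odd i then [n] else [])"

definition wword :: "nat \<Rightarrow> nat \<Rightarrow> nat list" where
  "wword n j = (if j < n - 1 then wbase n j else [n] @ wbase n (j - (n - 1)) @ [n])"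

text \<open>Points of closed ball (nonzero representatives with nonpositive norm).\<close>
definition closedB :: "complex^2^2 \<Rightarrow> complex^2 \<Rightarrow> bool" where
  "closedB J x \<longleftrightarrow> x \<noteq> 0 \<and> Re (herm J x x) \<le> 0"

text \<open>x and y represent the same isotropic point.\<close>
definition iso_eq :: "complex^2^2 \<Rightarrow> complex^2 \<Rightarrow> complex^2 \<Rightarrow> bool" where
  "iso_eq J x y \<longleftrightarrow> herm J x x = 0 \<and> (\<exists>c. y = c *s x)"

definition tri_area :: "complex^2^2 \<Rightarrow> complex^2 \<Rightarrow> complex^2 \<Rightarrow> complex^2 \<Rightarrow> real" where
  "tri_area J a b c =
     (if iso_eq J a b \<or> iso_eq J b c \<or> iso_eq J c a then 0
      else 2 * Arg (- (herm J a b * herm J b c * herm J c a)))"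

text \<open>Area(p_1,...,p_m) computed with auxiliary point c (points indexed 0..m-1).\<close>
definition area_poly :: "complex^2^2 \<Rightarrow> complex^2 \<Rightarrow> (nat \<Rightarrow> complex^2) \<Rightarrow> nat \<Rightarrow> real" where
  "area_poly J c ps m = (\<Sum>k<m. tri_area J c (ps k) (ps (Suc k mod m)))"

definition area_n :: "complex^2^2 \<Rightarrow> nat \<Rightarrow> (nat list \<Rightarrow> complex^2^2) \<Rightarrow> complex^2 \<Rightarrow>
                      complex^2 \<Rightarrow> complex^2 \<Rightarrow> real" where
  "area_n J n \<rho> c p q =
     area_poly J c (\<lambda>j. \<rho> (wword n j) *v (if even j then p else q)) (2 * n - 2)"

end

theory Submission
  imports Defs
begin

definition Zt :: "complex \<Rightarrow> complex \<Rightarrow> complex \<Rightarrow> complex" where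
  "Zt a b c = - ((a * cnj b - 1) * (b * cnj c - 1) * (c * cnj a - 1))"

lemma Zt_cyc: "Zt b c a = Zt a b c"
  unfolding Zt_def by (simp add: mult_ac)

lemma Zt_swap: "Zt b a c = cnj (Zt a b c)"
  unfolding Zt_def by (simp add: mult_ac)

lemma Zt_expand:
  "(a * cnj b - 1) * (b * cnj c - 1) * (c * cnj a - 1) =
    (a*cnj a)*(b*cnj b)*(c*cnj c) - 1 - (b*cnj b)*cnj (c*cnj a) - (c*cnj c)*cnj (a*cnj b)
    - (a*cnj a)*cnj(b*cnj c) + a*cnj b + b*cnj c + c*cnj a"
  by (simp add: algebra_simps)

lemma Re_Zt:
  "Re (Zt a b c) = (1 - norm a*norm b)*(1 - norm b*norm c)*(1 - norm c*norm a)
     + (1 - (norm c)\<^sup>2)*(norm a*norm b - Re (a*cnj b))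
     + (1 - (norm a)\<^sup>2)*(norm b*norm c - Re (b*cnj c))
     + (1 - (norm b)\<^sup>2)*(norm c*norm a - Re (c*cnj a))"
proof -
  have sq: "\<And>z. z * cnj z = of_real ((norm z)\<^sup>2)" by (rule complex_norm_square[symmetric])
  have "Re (Zt a b c) = - ((norm a)\<^sup>2*(norm b)\<^sup>2*(norm c)\<^sup>2 - 1 - (norm b)\<^sup>2 * Re (c*cnj a)
     - (norm c)\<^sup>2 * Re (a*cnj b) - (norm a)\<^sup>2 * Re (b * cnj c) + Re (a*cnj b) + Re (b*cnj c) + Re(c*cnj a))"
    unfolding Zt_def Zt_expand sq by simp
  then show ?thesis by (simp add: algebra_simps power2_eq_square)
qed

lemma Re_le_normprod: "Re (a * cnj b) \<le> norm a * norm b"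
  by (metis complex_Re_le_cmod complex_mod_cnj norm_mult)

lemma Zt_Re_nonneg:
  assumes "norm a \<le> 1" "norm b \<le> 1" "norm c \<le> 1"
  shows "0 \<le> Re (Zt a b c)"
proof -
  have p1: "0 \<le> (1 - norm a*norm b)" "0 \<le> (1 - norm b*norm c)" "0 \<le> (1 - norm c*norm a)"
    using assms by (auto intro!: mult_le_one)
  have p2: "0 \<le> 1 - (norm a)\<^sup>2" "0 \<le> 1 - (norm b)\<^sup>2" "0 \<le> 1 - (norm c)\<^sup>2"
    using assms by (auto intro!: power_le_one)
  have p3: "0 \<le> norm a*norm b - Re (a*cnj b)" "0 \<le> norm b*norm c - Re (b*cnj c)"
     "0 \<le> norm c*norm a - Re (c*cnj a)" using Re_le_normprod by (auto simp: algebra_simps)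
  show ?thesis unfolding Re_Zt
    using p1 p2 p3 by (intro add_nonneg_nonneg mult_nonneg_nonneg) auto
qed

lemma eq_of_prod1:
  assumes "norm a \<le> 1" "norm b \<le> 1" "a * cnj b = 1"
  shows "a = b"
proof -
  have "norm a * norm b = 1" using assms(3)
    by (metis complex_mod_cnj norm_mult norm_one)
  then have "norm b = 1" using assms(1,2)
    by (metis mult_le_one mult_right_le_one_le norm_ge_zero order_antisym mult.commute mult_left_le)
  then have "b * cnj b = 1" by (metis complex_norm_square of_real_1 one_power2)
  then have "a = (a * cnj b) * b" by (metis mult.assoc mult.commute mult.right_neutral)
  then show ?thesis using assms(3) by simp
qed

lemma Zt_zero:
  assumes "norm a \<le> 1" "norm b \<le> 1" "norm c \<le> 1" "Zt a b c = 0"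
  shows "a = b \<or> b = c \<or> c = a"
  using assms eq_of_prod1[of a b] eq_of_prod1[of b c] eq_of_prod1[of c a]
  unfolding Zt_def by auto

lemma Arg_Zt_diag:
  assumes "norm a \<le> 1"
  shows "Arg (Zt a a c) = 0"
proof -
  have "Zt a a c = of_real ((1 - (norm a)\<^sup>2) * (norm (a * cnj c - 1))\<^sup>2)"
  proof -
    have e1: "a * cnj a = of_real ((norm a)\<^sup>2)" by (rule complex_norm_square[symmetric])
    have e2: "(a * cnj c - 1) * (c * cnj a - 1) = of_real ((norm (a * cnj c - 1))\<^sup>2)"
      by (subst complex_norm_square) simp
    have "Zt a a c = (1 - a * cnj a) * ((a * cnj c - 1) * (c * cnj a - 1))"
      unfolding Zt_def by (simp add: algebra_simps)
    then show ?thesis unfolding e1 e2 by simp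
  qed
  moreover have "0 \<le> (1 - (norm a)\<^sup>2) * (norm (a * cnj c - 1))\<^sup>2"
    using assms by (auto intro!: mult_nonneg_nonneg power_le_one)
  ultimately show ?thesis by (metis Arg_of_real not_less)
qed

lemma Zt_Re_zero_aux:
  assumes "norm a \<le> 1" "norm b \<le> 1" "norm c \<le> 1" "Re (Zt a b c) = 0" "Zt a b c \<noteq> 0"
  shows "norm a = 1"
proof (rule ccontr)
  assume "norm a \<noteq> 1"
  then have s: "norm a < 1" using assms(1) by simp
  have p1: "0 \<le> (1 - norm a*norm b)" "0 \<le> (1 - norm b*norm c)" "0 \<le> (1 - norm c*norm a)"
    using assms by (auto intro!: mult_le_one)
  have p2: "0 \<le> 1 - (norm a)\<^sup>2" "0 \<le> 1 - (norm b)\<^sup>2" "0 \<le> 1 - (norm c)\<^sup>2"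
    using assms by (auto intro!: power_le_one)
  have p3: "0 \<le> norm a*norm b - Re (a*cnj b)" "0 \<le> norm b*norm c - Re (b*cnj c)"
     "0 \<le> norm c*norm a - Re (c*cnj a)" using Re_le_normprod by (auto simp: algebra_simps)
  have t1: "0 \<le> (1 - norm a*norm b)*(1 - norm b*norm c)*(1 - norm c*norm a)"
    using p1 by simp
  have t2: "0 \<le> (1 - (norm c)\<^sup>2)*(norm a*norm b - Re (a*cnj b))"
    "0 \<le> (1 - (norm a)\<^sup>2)*(norm b*norm c - Re (b*cnj c))"
    "0 \<le> (1 - (norm b)\<^sup>2)*(norm c*norm a - Re (c*cnj a))" using p2 p3 by simp_all
  have z1: "(1 - norm a*norm b)*(1 - norm b*norm c)*(1 - norm c*norm a) = 0"
   and z3: "(1 - (norm a)\<^sup>2)*(norm b*norm c - Re (b*cnj c)) = 0"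
    using assms(4) t1 t2 unfolding Re_Zt by linarith+
  have "norm a * norm b \<le> norm a" using assms(2) by (simp add: mult_left_le)
  then have ab: "norm a * norm b < 1" using s by linarith
  have "norm c * norm a \<le> norm a" using assms(3) by (simp add: mult_left_le_one_le)
  then have ca: "norm c * norm a < 1" using s by linarith
  have bc: "norm b * norm c = 1" using z1 ab ca by auto
  have sa: "1 - (norm a)\<^sup>2 > 0" using s by (simp add: power_less_one_iff abs_less_iff)
  have re: "Re (b * cnj c) = 1" using z3 sa bc by simp
  have nm: "norm (b * cnj c) = 1" using bc by (simp add: norm_mult)
  have "(Im (b * cnj c))\<^sup>2 = 0"
    using nm re by (metis add_cancel_right_right cmod_power2 one_power2 power_one)
  then have "b * cnj c = 1" using re by (simp add: complex_eq_iff)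
  then have "Zt a b c = 0" unfolding Zt_def by simp
  then show False using assms(5) by simp
qed

lemma Zt_Re_zero:
  assumes "norm a \<le> 1" "norm b \<le> 1" "norm c \<le> 1" "Re (Zt a b c) = 0" "Zt a b c \<noteq> 0"
  shows "norm a = 1 \<and> norm b = 1 \<and> norm c = 1"
  using Zt_Re_zero_aux[of a b c] Zt_Re_zero_aux[of b c a] Zt_Re_zero_aux[of c a b] assms
  by (simp add: Zt_cyc)

lemma Im_Zt_unit:
  assumes "norm a = 1" "norm b = 1" "norm c = 1"
  shows "Im (Zt a b c) = -2 * (Im (a*cnj b) + Im (b*cnj c) + Im (c*cnj a))"
proof -
  have "\<And>z. norm z = 1 \<Longrightarrow> z * cnj z = 1" by (metis complex_norm_square of_real_1 one_power2)
  then have u: "a*cnj a = 1" "b*cnj b = 1" "c * cnj c = 1" using assms by auto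
  show ?thesis unfolding Zt_def Zt_expand u by simp
qed

lemma Arg_Zt_swap:
  assumes "norm a \<le> 1" "norm b \<le> 1" "norm c \<le> 1"
  shows "Arg (Zt b a c) = - Arg (Zt a b c)"
proof -
  have re: "0 \<le> Re (Zt a b c)" using Zt_Re_nonneg assms by blast
  have sw: "Arg (Zt b a c) = Arg (cnj (Zt a b c))" by (rule arg_cong[OF Zt_swap])
  show ?thesis
  proof (cases "Zt a b c \<in> \<real>")
    case True
    then have "Arg (Zt a b c) = 0" using re Arg_real by simp
    then show ?thesis using True sw by (simp add: Arg_cnj)
  next
    case False
    then show ?thesis using sw by (simp add: Arg_cnj)
  qed
qed

lemma PP: "(x * cnj y - 1) * (y * cnj x - 1) = of_real ((norm (x * cnj y - 1))\<^sup>2)"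
  by (subst complex_norm_square) simp

lemma Zt_prod4:
  "Zt b c d * Zt c a d * Zt a b d * Zt b a c =
    of_real ((norm (b*cnj c - 1))\<^sup>2 * (norm (c*cnj d - 1))\<^sup>2 * (norm (d*cnj b - 1))\<^sup>2 *
             (norm (c*cnj a - 1))\<^sup>2 * (norm (a*cnj d - 1))\<^sup>2 * (norm (a*cnj b - 1))\<^sup>2)"
proof -
  have "Zt b c d * Zt c a d * Zt a b d * Zt b a c =
     ((b*cnj c - 1) * (c * cnj b - 1)) * ((c*cnj d - 1) * (d*cnj c - 1)) * ((d*cnj b - 1)*(b*cnj d - 1))
     * ((c*cnj a - 1) * (a*cnj c - 1)) * ((a*cnj d - 1) * (d*cnj a - 1)) * ((a*cnj b - 1) * (b*cnj a - 1))"
    unfolding Zt_def by (simp add: mult_ac)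
  then show ?thesis unfolding PP by simp
qed

lemma disc_cocycle:
  assumes a: "norm a \<le> 1" and b: "norm b \<le> 1" and c: "norm c \<le> 1" and d: "norm d \<le> 1"
  shows "Arg (Zt b c d) - Arg (Zt a c d) + Arg (Zt a b d) - Arg (Zt a b c) = 0"
proof -
  have diag: "\<And>x y. norm x \<le> 1 \<Longrightarrow> Arg (Zt x x y) = 0" using Arg_Zt_diag by blast
  have diag2: "\<And>x y. norm y \<le> 1 \<Longrightarrow> Arg (Zt x y y) = 0"
    using Arg_Zt_diag Zt_cyc by metis
  have diag3: "\<And>x y. norm x \<le> 1 \<Longrightarrow> Arg (Zt x y x) = 0"
    using Arg_Zt_diag Zt_cyc by metis
  show ?thesis
  proof (cases "a = b \<or> a = c \<or> a = d \<or> b = c \<or> b = d \<or> c = d")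
    case True
    then show ?thesis
    proof (elim disjE)
      assume "a = b" then show ?thesis using diag a by simp
    next
      assume "a = c" then show ?thesis using diag diag3 a Arg_Zt_swap[OF a b d] by simp
    next
      assume "a = d" then show ?thesis using diag diag3 a Zt_cyc[of b c d] by simp
    next
      assume "b = c" then show ?thesis using diag diag2 b by simp
    next
      assume "b = d" then show ?thesis using diag2 diag3 b Arg_Zt_swap[OF a c b] Zt_cyc[of a b c]
        by simp
    next
      assume "c = d" then show ?thesis using diag2 c by simp
    qed
  next
    case False
    have nz: "Zt b c d \<noteq> 0" "Zt a c d \<noteq> 0" "Zt a b d \<noteq> 0" "Zt a b c \<noteq> 0"
      using False Zt_zero[OF b c d] Zt_zero[OF a c d] Zt_zero[OF a b d] Zt_zero[OF a b c] by auto
    have nz': "Zt c a d \<noteq> 0" "Zt b a c \<noteq> 0"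
      using nz Zt_swap[of a c d] Zt_swap[of a b c] by auto
    define th where "th = Arg (Zt b c d) - Arg (Zt a c d) + Arg (Zt a b d) - Arg (Zt a b c)"
    have th2: "th = Arg (Zt b c d) + Arg (Zt c a d) + Arg (Zt a b d) + Arg (Zt b a c)"
      unfolding th_def using Arg_Zt_swap[OF a c d] Arg_Zt_swap[OF a b c] by simp
    define r where "r = (norm (b*cnj c - 1))\<^sup>2 * (norm (c*cnj d - 1))\<^sup>2 * (norm (d*cnj b - 1))\<^sup>2 *
             (norm (c*cnj a - 1))\<^sup>2 * (norm (a*cnj d - 1))\<^sup>2 * (norm (a*cnj b - 1))\<^sup>2"
    have pr: "Zt b c d * Zt c a d * Zt a b d * Zt b a c = of_real r"
      unfolding r_def by (rule Zt_prod4)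
    have "of_real r \<noteq> (0::complex)" unfolding pr[symmetric] using nz nz' by simp
    moreover have "0 \<le> r" unfolding r_def by simp
    ultimately have rpos: "0 < r" by simp
    have "cis th = sgn (Zt b c d) * sgn (Zt c a d) * sgn (Zt a b d) * sgn (Zt b a c)"
      unfolding th2 using nz nz' by (simp add: cis_mult[symmetric] cis_Arg)
    also have "\<dots> = sgn (of_real r)" unfolding pr[symmetric] by (simp add: sgn_mult)
    also have "\<dots> = 1" using rpos by (simp add: sgn_of_real)
    finally have "cis th = 1" .
    then have "cos th = 1" by (metis cis.sel(1) one_complex.sel(1))
    then obtain k :: int where k: "th = real_of_int k * 2 * pi" using cos_one_2pi_int by blast
    have bnd: "\<bar>Arg (Zt b c d)\<bar> \<le> pi/2" "\<bar>Arg (Zt a c d)\<bar> \<le> pi/2"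
      "\<bar>Arg (Zt a b d)\<bar> \<le> pi/2" "\<bar>Arg (Zt a b c)\<bar> \<le> pi/2"
      using Zt_Re_nonneg[OF b c d] Zt_Re_nonneg[OF a c d] Zt_Re_nonneg[OF a b d]
        Zt_Re_nonneg[OF a b c] by (simp_all only: Arg_Re_nonneg)
    have "\<bar>th\<bar> \<le> 2 * pi" unfolding th_def using bnd by linarith
    then have "\<bar>real_of_int k\<bar> * (2*pi) \<le> 1 * (2*pi)" using k by (simp add: abs_mult)
    then have "\<bar>real_of_int k\<bar> \<le> 1" using pi_gt_zero by (meson mult_le_cancel_right_pos zero_less_mult_iff zero_less_numeral)
    then have kk: "k = -1 \<or> k = 0 \<or> k = 1" by linarith
    have ext: False if ex: "\<bar>Arg (Zt b c d)\<bar> = pi/2" "\<bar>Arg (Zt a c d)\<bar> = pi/2"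
        "\<bar>Arg (Zt a b d)\<bar> = pi/2" "\<bar>Arg (Zt a b c)\<bar> = pi/2"
        and sg: "Arg (Zt b c d) = - Arg (Zt a c d)" "Arg (Zt a b d) = - Arg (Zt a b c)"
                "Arg (Zt b c d) = Arg (Zt a b d)"
    proof -
      have re0: "\<And>z. \<bar>Arg z\<bar> = pi/2 \<Longrightarrow> 0 \<le> Re z \<Longrightarrow> Re z = 0"
        using Arg_Re_pos by (metis less_irrefl not_le order_antisym)
      have r1: "Re (Zt b c d) = 0" using re0 ex(1) Zt_Re_nonneg[OF b c d] by blast
      have r2: "Re (Zt a c d) = 0" using re0 ex(2) Zt_Re_nonneg[OF a c d] by blast
      have u1: "norm b = 1 \<and> norm c = 1 \<and> norm d = 1" using Zt_Re_zero[OF b c d r1 nz(1)] .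
      have u2: "norm a = 1" using Zt_Re_zero[OF a c d r2 nz(2)] by blast
      have im: "Im (Zt b c d) - Im (Zt a c d) + Im (Zt a b d) - Im (Zt a b c) = 0"
      proof -
        have asy: "\<And>x y. Im (y * cnj x) = - Im (x * cnj y)" by simp
        show ?thesis using u1 u2 by (simp add: Im_Zt_unit asy algebra_simps)
      qed
      have sgn_im: "\<And>z. Arg z = pi/2 \<Longrightarrow> 0 < Im z" "\<And>z. Arg z = -pi/2 \<Longrightarrow> Im z < 0"
      proof -
        fix z assume "Arg z = pi/2"
        then have "0 < Arg z" "Arg z < pi" using pi_gt_zero by linarith+
        then have "0 < Arg z \<and> Arg z < pi" by blast
        then show "0 < Im z" using Arg_lt_pi by blast
      next
        fix z assume "Arg z = -pi/2"
        then have "Arg z < 0" using pi_gt_zero by linarith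
        then show "Im z < 0" using Arg_neg_iff by blast
      qed
      show False
      proof (cases "Arg (Zt b c d) = pi/2")
        case True
        then have h: "Arg (Zt a c d) = -pi/2" "Arg (Zt a b d) = pi/2" "Arg (Zt a b c) = -pi/2"
          using sg by auto
        show False using sgn_im(1)[OF True] sgn_im(2)[OF h(1)] sgn_im(1)[OF h(2)] sgn_im(2)[OF h(3)] im
          by linarith
      next
        case False
        then have t: "Arg (Zt b c d) = -pi/2" using ex(1) by (auto simp: abs_if split: if_splits)
        then have h: "Arg (Zt a c d) = pi/2" "Arg (Zt a b d) = -pi/2" "Arg (Zt a b c) = pi/2"
          using sg by auto
        show False using sgn_im(2)[OF t] sgn_im(1)[OF h(1)] sgn_im(2)[OF h(2)] sgn_im(1)[OF h(3)] im
          by linarith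
      qed
    qed
    show ?thesis
    proof -
      have "th = 0"
      proof (cases "k = 0")
        case True then show ?thesis using k by simp
      next
        case False
        then have "th = 2*pi \<or> th = -2*pi" using kk k by auto
        then show ?thesis
        proof
          assume "th = 2*pi"
          then have "Arg (Zt b c d) = pi/2" "Arg (Zt a c d) = -pi/2" "Arg (Zt a b d) = pi/2" "Arg (Zt a b c) = -pi/2"
            unfolding th_def using bnd by (auto simp: abs_le_iff)
          note ee = this
          have "\<bar>Arg (Zt b c d)\<bar> = pi/2" "\<bar>Arg (Zt a c d)\<bar> = pi/2"
            "\<bar>Arg (Zt a b d)\<bar> = pi/2" "\<bar>Arg (Zt a b c)\<bar> = pi/2"
            by (simp_all only: ee) simp_all
          then have False using ext ee by simp
          then show ?thesis ..
        next
          assume "th = -2*pi"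
          then have "Arg (Zt b c d) = -pi/2" "Arg (Zt a c d) = pi/2" "Arg (Zt a b d) = -pi/2" "Arg (Zt a b c) = pi/2"
            unfolding th_def using bnd by (auto simp: abs_le_iff)
          note ee = this
          have "\<bar>Arg (Zt b c d)\<bar> = pi/2" "\<bar>Arg (Zt a c d)\<bar> = pi/2"
            "\<bar>Arg (Zt a b d)\<bar> = pi/2" "\<bar>Arg (Zt a b c)\<bar> = pi/2"
            by (simp_all only: ee) simp_all
          then have False using ext ee by simp
          then show ?thesis ..
        qed
      qed
      then show ?thesis unfolding th_def .
    qed
  qed
qed

lemma herm_expl: "herm J u v = u$1*J$1$1*cnj(v$1) + u$1*J$1$2*cnj(v$2) + u$2*J$2$1*cnj(v$1) + u$2*J$2$2*cnj(v$2)"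
  by (simp add: herm_def sum_2)

lemma herm_sym:
  assumes "\<forall>i j. J$j$i = cnj (J$i$j)"
  shows "herm J y x = cnj (herm J x y)"
proof -
  have t: "y$i * J$i$j * cnj(x$j) = cnj (x$j * J$j$i * cnj (y$i))" for i j
  proof -
    have "J$i$j = cnj(J$j$i)" using assms by blast
    then show ?thesis by (simp add: mult_ac)
  qed
  have "herm J y x = (\<Sum>i\<in>UNIV. \<Sum>j\<in>UNIV. cnj (x$j * J$j$i * cnj (y$i)))"
    unfolding herm_def by (intro sum.cong refl) (rule t)
  also have "\<dots> = cnj (\<Sum>i\<in>UNIV. \<Sum>j\<in>UNIV. x$j * J$j$i * cnj (y$i))"
    by (simp add: cnj_sum)
  also have "\<dots> = cnj (herm J x y)"
    unfolding herm_def by (subst sum.swap) simp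
  finally show ?thesis .
qed

lemma herm_add1: "herm J (x + y) z = herm J x z + herm J y z"
  unfolding herm_expl by (simp add: algebra_simps)
lemma herm_smult1: "herm J (c *s x) z = c * herm J x z"
  unfolding herm_expl by (simp add: algebra_simps)
lemma herm_smult2: "herm J x (c *s z) = cnj c * herm J x z"
  unfolding herm_expl by (simp add: algebra_simps)
lemma herm_zero1[simp]: "herm J 0 z = 0"
  unfolding herm_expl by simp

lemma ring2x2:
  fixes a b c d p q r s :: complex
  assumes "a*p+b*q=1" "a*r+b * s=0" "c*p+d*q=0" "c*r+d * s=-1"
  shows "p*a - r*c = 1" "p*b - r*d = 0" "q*a - s*c = 0" "q*b - s*d = 1"
proof -
  define D where "D = a*d - b*c"
  have dp: "D*p = d" proof -
    have "D*p = d*(a*p+b*q) - b*(c*p+d*q)" unfolding D_def by (simp add: algebra_simps)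
    then show ?thesis using assms by simp qed
  have dq: "D*q = -c" proof -
    have "D*q = a*(c*p+d*q) - c*(a*p+b*q)" unfolding D_def by (simp add: algebra_simps)
    then show ?thesis using assms by simp qed
  have dr: "D*r = b" proof -
    have "D*r = d*(a*r+b * s) - b*(c*r+d * s)" unfolding D_def by (simp add: algebra_simps)
    then show ?thesis using assms by simp qed
  have ds: "D * s = -a" proof -
    have "D * s = a*(c*r+d * s) - c*(a*r+b * s)" unfolding D_def by (simp add: algebra_simps)
    then show ?thesis using assms by simp qed
  have D0: "D \<noteq> 0"
  proof
    assume "D = 0"
    then have "d = 0" "c = 0" "b = 0" "a = 0" using dp dq dr ds by auto
    then show False using assms(1) by simp
  qed
  have "D*(p*a - r*c) = a*(D*p) - c*(D*r)" "D*(p*b - r*d) = b*(D*p) - d*(D*r)"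
       "D*(q*a - s*c) = a*(D*q) - c*(D * s)" "D*(q*b - s*d) = b*(D*q) - d*(D * s)"
    by (simp_all add: algebra_simps)
  then have "D*(p*a - r*c) = D*1" "D*(p*b - r*d) = D*0" "D*(q*a - s*c) = D*0" "D*(q*b - s*d) = D*1"
    unfolding dp dq dr ds by (simp_all add: D_def algebra_simps)
  then show "p*a - r*c = 1" "p*b - r*d = 0" "q*a - s*c = 0" "q*b - s*d = 1"
    using D0 by simp_all
qed

lemma basis_decomp:
  assumes "signature_pm J"
  obtains e1 e2 where "herm J e1 e1 = 1" "herm J e2 e2 = -1" "herm J e1 e2 = 0"
    "\<And>x. x = herm J x e1 *s e1 + (- herm J x e2) *s e2"
proof -
  from assms obtain e1 e2 where h: "\<forall>i j. J$j$i = cnj (J$i$j)" and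
    e: "herm J e1 e1 = 1" "herm J e2 e2 = -1" "herm J e1 e2 = 0"
    unfolding signature_pm_def by blast
  have e21: "herm J e2 e1 = 0" using herm_sym[OF h, of e2 e1] e(3) by simp
  define p where "p = J$1$1*cnj(e1$1) + J$1$2*cnj(e1$2)"
  define q where "q = J$2$1*cnj(e1$1) + J$2$2*cnj(e1$2)"
  define r where "r = J$1$1*cnj(e2$1) + J$1$2*cnj(e2$2)"
  define s where "s = J$2$1*cnj(e2$1) + J$2$2*cnj(e2$2)"
  have hx1: "\<And>x. herm J x e1 = x$1 * p + x$2 * q" unfolding herm_expl p_def q_def by (simp add: algebra_simps)
  have hx2: "\<And>x. herm J x e2 = x$1 * r + x$2 * s" unfolding herm_expl r_def s_def by (simp add: algebra_simps)
  have c1: "e1$1*p+e1$2*q=1" using e(1) hx1 by simp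
  have c2: "e1$1*r+e1$2 * s=0" using e(3) hx2 by simp
  have c3: "e2$1*p+e2$2*q=0" using e21 hx1 by simp
  have c4: "e2$1*r+e2$2 * s=-1" using e(2) hx2 by simp
  note R = ring2x2[OF c1 c2 c3 c4]
  have "\<And>x. x = herm J x e1 *s e1 + (- herm J x e2) *s e2"
  proof -
    fix x :: "complex^2"
    have "(x$1 * p + x$2 * q) * e1$1 - (x$1 * r + x$2 * s) * e2$1 = x$1*(p*e1$1 - r*e2$1) + x$2*(q*e1$1 - s*e2$1)"
      "(x$1 * p + x$2 * q) * e1$2 - (x$1 * r + x$2 * s) * e2$2 = x$1*(p*e1$2 - r*e2$2) + x$2*(q*e1$2 - s*e2$2)"
      by (simp_all add: algebra_simps)
    then have "x$1 = (x$1 * p + x$2 * q) * e1$1 - (x$1 * r + x$2 * s) * e2$1"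
      "x$2 = (x$1 * p + x$2 * q) * e1$2 - (x$1 * r + x$2 * s) * e2$2" using R by simp_all
    moreover have "(herm J x e1 *s e1 + (- herm J x e2) *s e2)$1 = (x$1 * p + x$2 * q) * e1$1 - (x$1 * r + x$2 * s) * e2$1"
      "(herm J x e1 *s e1 + (- herm J x e2) *s e2)$2 = (x$1 * p + x$2 * q) * e1$2 - (x$1 * r + x$2 * s) * e2$2"
      unfolding hx1 hx2 by (simp_all add: algebra_simps)
    ultimately show "x = herm J x e1 *s e1 + (- herm J x e2) *s e2"
      by (simp only: vec_eq_iff forall_2)
  qed
  then show ?thesis using that e by blast
qed

lemma herm_facts:
  assumes "signature_pm J"
  shows "\<forall>x y. herm J y x = cnj (herm J x y)"
    and "\<forall>x. (\<forall>y. herm J x y = 0) \<longrightarrow> x = 0"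
    and "\<exists>\<alpha> \<beta>. \<forall>x y. herm J x y = \<alpha> x * cnj (\<alpha> y) - \<beta> x * cnj (\<beta> y)"
proof -
  have h: "\<forall>i j. J$j$i = cnj (J$i$j)" using assms unfolding signature_pm_def by blast
  show hs: "\<forall>x y. herm J y x = cnj (herm J x y)" using herm_sym[OF h] by blast
  obtain e1 e2 where e: "herm J e1 e1 = 1" "herm J e2 e2 = -1" "herm J e1 e2 = 0"
    and dec: "\<And>x. x = herm J x e1 *s e1 + (- herm J x e2) *s e2"
    using basis_decomp[OF assms] by blast
  show "\<forall>x. (\<forall>y. herm J x y = 0) \<longrightarrow> x = 0"
  proof (intro allI impI)
    fix x assume "\<forall>y. herm J x y = 0"
    then have "herm J x e1 = 0" "herm J x e2 = 0" by auto
    then show "x = 0" using dec[of x] by simp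
  qed
  show "\<exists>\<alpha> \<beta>. \<forall>x y. herm J x y = \<alpha> x * cnj (\<alpha> y) - \<beta> x * cnj (\<beta> y)"
  proof (intro exI allI)
    fix x y
    have "herm J x y = herm J (herm J x e1 *s e1 + (- herm J x e2) *s e2) y"
      by (rule arg_cong[where f="\<lambda>z. herm J z y"]) (rule dec)
    also have "\<dots> = herm J x e1 * herm J e1 y + (- herm J x e2) * herm J e2 y"
      by (simp only: herm_add1 herm_smult1)
    also have "\<dots> = herm J x e1 * cnj (herm J y e1) - (- herm J x e2) * cnj (- herm J y e2)"
      using hs by (metis complex_cnj_minus minus_mult_commute mult_minus_right diff_minus_eq_add minus_minus)
    finally show "herm J x y = herm J x e1 * cnj (herm J y e1) - (- herm J x e2) * cnj (- herm J y e2)" .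
  qed
qed

lemma iso_eq_herm: "iso_eq J a b \<Longrightarrow> herm J a b = 0"
  unfolding iso_eq_def by (auto simp: herm_smult2)

lemma tri_uniform: "tri_area J a b c = 2 * Arg (- (herm J a b * herm J b c * herm J c a))"
  unfolding tri_area_def using iso_eq_herm[of J a b] iso_eq_herm[of J b c] iso_eq_herm[of J c a]
  by (auto simp: Arg_zero)

lemma tri_cyc: "tri_area J b c a = tri_area J a b c"
  unfolding tri_uniform by (simp add: mult_ac)

lemma tri_disc:
  assumes "signature_pm J"
  shows "\<exists>\<zeta>. (\<forall>x. closedB J x \<longrightarrow> norm (\<zeta> x) \<le> 1) \<and>
     (\<forall>a b c. closedB J a \<and> closedB J b \<and> closedB J c \<longrightarrow>
        tri_area J a b c = 2 * Arg (Zt (\<zeta> a) (\<zeta> b) (\<zeta> c)))"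
proof -
  obtain \<alpha> \<beta> where ab: "\<And>x y. herm J x y = \<alpha> x * cnj (\<alpha> y) - \<beta> x * cnj (\<beta> y)"
    using herm_facts(3)[OF assms] by blast
  have nd: "\<And>x. (\<forall>y. herm J x y = 0) \<Longrightarrow> x = 0" using herm_facts(2)[OF assms] by blast
  have sq: "\<And>z. z * cnj z = of_real ((norm z)\<^sup>2)" by (rule complex_norm_square[symmetric])
  have cb: "\<beta> x \<noteq> 0 \<and> norm (\<alpha> x) \<le> norm (\<beta> x)" if "closedB J x" for x
  proof -
    have hx: "herm J x x = of_real ((norm (\<alpha> x))\<^sup>2 - (norm (\<beta> x))\<^sup>2)"
      using ab[of x x] sq by simp
    have "Re (herm J x x) \<le> 0" "x \<noteq> 0" using that unfolding closedB_def by auto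
    then have le: "(norm (\<alpha> x))\<^sup>2 \<le> (norm (\<beta> x))\<^sup>2" using hx by simp
    then have le2: "norm (\<alpha> x) \<le> norm (\<beta> x)" using power2_le_imp_le norm_ge_zero by blast
    have "\<beta> x \<noteq> 0"
    proof
      assume "\<beta> x = 0"
      then have "\<alpha> x = 0" using le2 by simp
      then have "\<forall>y. herm J x y = 0" using ab \<open>\<beta> x = 0\<close> by simp
      then show False using nd \<open>x \<noteq> 0\<close> by blast
    qed
    then show ?thesis using le2 by blast
  qed
  define \<zeta> where "\<zeta> x = \<alpha> x / \<beta> x" for x
  have zn: "norm (\<zeta> x) \<le> 1" if "closedB J x" for x
    using cb[OF that] unfolding \<zeta>_def by (simp add: norm_divide divide_le_eq_1)
  have hz: "herm J x y = \<beta> x * cnj (\<beta> y) * (\<zeta> x * cnj (\<zeta> y) - 1)"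
    if "closedB J x" "closedB J y" for x y
  proof -
    have "\<alpha> x = \<zeta> x * \<beta> x" "\<alpha> y = \<zeta> y * \<beta> y" using cb that unfolding \<zeta>_def by auto
    then show ?thesis using ab[of x y] by (simp add: algebra_simps)
  qed
  have main: "tri_area J a b c = 2 * Arg (Zt (\<zeta> a) (\<zeta> b) (\<zeta> c))"
    if "closedB J a" "closedB J b" "closedB J c" for a b c
  proof -
    define r where "r = (norm (\<beta> a))\<^sup>2 * (norm (\<beta> b))\<^sup>2 * (norm (\<beta> c))\<^sup>2"
    have rpos: "0 < r" unfolding r_def using cb that by simp
    have "- (herm J a b * herm J b c * herm J c a) =
       (\<beta> a * cnj (\<beta> a)) * (\<beta> b * cnj (\<beta> b)) * (\<beta> c * cnj (\<beta> c)) * Zt (\<zeta> a) (\<zeta> b) (\<zeta> c)"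
      unfolding hz[OF that(1,2)] hz[OF that(2,3)] hz[OF that(3,1)] Zt_def by (simp add: mult_ac)
    also have "\<dots> = of_real r * Zt (\<zeta> a) (\<zeta> b) (\<zeta> c)" unfolding sq r_def by simp
    finally show ?thesis unfolding tri_uniform using rpos by simp
  qed
  show ?thesis using zn main by blast
qed

lemma hcong: "hequiv n x y \<Longrightarrow> hequiv n (u @ x @ v) (u @ y @ v)"
proof (induction arbitrary: u v rule: hequiv.induct)
  case (hrefl w) then show ?case by (rule hequiv.hrefl)
next
  case (hsym a b) then show ?case by (blast intro: hequiv.hsym)
next
  case (htrans a b c) then show ?case by (blast intro: hequiv.htrans)
next
  case (hcancel i a b)
  have "hequiv n ((u @ a) @ [i, i] @ (b @ v)) ((u @ a) @ (b @ v))"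
    using hcancel by (rule hequiv.hcancel)
  then show ?case by simp
next
  case (hrel a b)
  have "hequiv n ((u @ a) @ rev [1..<n+1] @ (b @ v)) ((u @ a) @ (b @ v))"
    by (rule hequiv.hrel)
  then show ?case by simp
qed

lemma htr: "hequiv n a b \<Longrightarrow> hequiv n b c \<Longrightarrow> hequiv n a c"
  by (rule hequiv.htrans)
lemma hsy: "hequiv n a b \<Longrightarrow> hequiv n b a"
  by (rule hequiv.hsym)

lemma hcancel_word: "set w \<subseteq> {1..n} \<Longrightarrow> hequiv n (u @ w @ rev w @ v) (u @ v)"
proof (induction w arbitrary: u v)
  case Nil then show ?case by (simp add: hequiv.hrefl)
next
  case (Cons a w)
  have a: "a \<in> {1..n}" and w: "set w \<subseteq> {1..n}" using Cons.prems by auto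
  have "hequiv n ((u @ [a]) @ w @ rev w @ ([a] @ v)) ((u @ [a]) @ ([a] @ v))"
    using Cons.IH[OF w] .
  moreover have "hequiv n (u @ [a, a] @ v) (u @ v)" using a by (rule hequiv.hcancel)
  ultimately show ?case by (auto intro: htr)
qed

lemma hcancel_nn: "1 \<le> n \<Longrightarrow> hequiv n (u @ [n, n] @ v) (u @ v)"
  by (rule hequiv.hcancel) simp

lemma vword_Suc: "vword (Suc i) = Suc i # vword i"
  unfolding vword_def by simp

lemma set_vword: "set (vword i) = {1..i}"
  unfolding vword_def by auto

lemma K_word: "rev (vword i) @ vword (Suc i) = rev (vword (Suc i)) @ vword i"
  by (simp add: vword_Suc)

lemma wword_lo: "j < n - 1 \<Longrightarrow> wword n j = wbase n j"
  unfolding wword_def by simp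
lemma wword_hi: "n - 1 \<le> j \<Longrightarrow> wword n j = [n] @ wbase n (j - (n - 1)) @ [n]"
  unfolding wword_def by simp
lemma wbase_even: "even i \<Longrightarrow> wbase n i = vword i"
  unfolding wbase_def by simp
lemma wbase_odd: "odd i \<Longrightarrow> wbase n i = vword i @ [n]"
  unfolding wbase_def by simp

lemma vword_top: "2 \<le> n \<Longrightarrow> rev [1..<n+1] = [n, n - 1] @ vword (n - 2)"
proof -
  assume "2 \<le> n"
  then obtain k where k: "n = Suc (Suc k)" by (metis add_2_eq_Suc le_Suc_ex)
  have "[1..<Suc (Suc k) + 1] = [1..<Suc k] @ [Suc k] @ [Suc (Suc k)]" by simp
  then show ?thesis unfolding k vword_def by simp
qed

lemma rel_consequences:
  assumes "4 \<le> n"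
  shows "hequiv n (rev (vword (n-2)) @ [n, n]) ([n] @ vword (n-2) @ [n])"
    and "hequiv n ([n] @ rev (vword (n-2)) @ [n]) ([n, n] @ vword (n-2))"
proof -
  define x where "x = vword (n-2)"
  have n1: "1 \<le> n" "n - 1 \<in> {1..n}" "n \<in> {1..n}" using assms by auto
  have sx: "set x \<subseteq> {1..n}" unfolding x_def set_vword by auto
  have R: "hequiv n ([n, n-1] @ x) []"
    using hequiv.hrel[of n "[]" "[]"] vword_top[of n] assms unfolding x_def by simp
  have s2: "set [n-1, n] \<subseteq> {1..n}" using n1 by auto
  have x1: "hequiv n ([n-1, n] @ ([n, n-1] @ x) @ []) ([n-1, n] @ [] @ [])"
    using hcong[OF R] .
  have x2: "hequiv n ([] @ [n-1, n] @ rev [n-1, n] @ x) ([] @ x)"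
    using hcancel_word[OF s2] .
  have x1': "hequiv n ((n-1) # n # n # (n-1) # x) [n-1, n]" using x1 by simp
  have x2': "hequiv n ((n-1) # n # n # (n-1) # x) x" using x2 by simp
  have X: "hequiv n x [n-1, n]" using x1' x2' by (meson htr hsy)
  have r1: "hequiv n ([] @ ([n, n-1] @ x) @ rev x) ([] @ [] @ rev x)" using hcong[OF R] .
  have r2: "hequiv n ([n, n-1] @ x @ rev x @ []) ([n, n-1] @ [])" using hcancel_word[OF sx] .
  have r1': "hequiv n (n # (n-1) # x @ rev x) (rev x)" using r1 by simp
  have r2': "hequiv n (n # (n-1) # x @ rev x) [n, n-1]" using r2 by simp
  have RX: "hequiv n (rev x) [n, n-1]" using r1' r2' by (meson htr hsy)
  have c1: "hequiv n ([n] @ x @ [n]) ([n] @ [n-1, n] @ [n])" using hcong[OF X] .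
  have c2: "hequiv n ([n, n-1] @ [n, n] @ []) ([n, n-1] @ [])" using hcancel_nn[OF n1(1)] .
  have c4: "hequiv n (rev x @ [n, n] @ []) (rev x @ [])" using hcancel_nn[OF n1(1)] .
  have c1': "hequiv n (n # x @ [n]) [n, n-1, n, n]" using c1 by simp
  have c2': "hequiv n [n, n-1, n, n] [n, n-1]" using c2 by simp
  have c4': "hequiv n (rev x @ [n, n]) (rev x)" using c4 by simp
  have "hequiv n (rev x @ [n, n]) (n # x @ [n])" using c1' c2' c4' RX by (meson htr hsy)
  then show "hequiv n (rev (vword (n-2)) @ [n, n]) ([n] @ vword (n-2) @ [n])"
    unfolding x_def by simp
  have d1: "hequiv n ([n] @ rev x @ [n]) ([n] @ [n, n-1] @ [n])" using hcong[OF RX] .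
  have d2: "hequiv n ([] @ [n, n] @ [n-1, n]) ([] @ [n-1, n])" using hcancel_nn[OF n1(1)] .
  have d3: "hequiv n ([] @ [n, n] @ x) ([] @ x)" using hcancel_nn[OF n1(1)] .
  have d1': "hequiv n (n # rev x @ [n]) [n, n, n-1, n]" using d1 by simp
  have d2': "hequiv n [n, n, n-1, n] [n-1, n]" using d2 by simp
  have d3': "hequiv n (n # n # x) x" using d3 by simp
  have "hequiv n (n # rev x @ [n]) (n # n # x)" using d1' d2' d3' X by (meson htr hsy)
  then show "hequiv n ([n] @ rev (vword (n-2)) @ [n]) ([n, n] @ vword (n-2))"
    unfolding x_def by simp
qed

lemma wword_lo_even: "j < n - 1 \<Longrightarrow> even j \<Longrightarrow> wword n j = vword j"
  by (simp add: wword_lo wbase_even)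
lemma wword_lo_odd: "j < n - 1 \<Longrightarrow> odd j \<Longrightarrow> wword n j = vword j @ [n]"
  by (simp add: wword_lo wbase_odd)
lemma wword_hi_even: "n - 1 \<le> j \<Longrightarrow> j - (n - 1) = i \<Longrightarrow> even i \<Longrightarrow> wword n j = [n] @ vword i @ [n]"
  by (simp add: wword_hi wbase_even)
lemma wword_hi_odd: "n - 1 \<le> j \<Longrightarrow> j - (n - 1) = i \<Longrightarrow> odd i \<Longrightarrow> wword n j = [n] @ (vword i @ [n]) @ [n]"
  by (simp add: wword_hi wbase_odd)
lemma vword_0: "vword 0 = []" by (simp add: vword_def)

lemma mod_sub: "(b::nat) \<le> a \<Longrightarrow> a < 2*b \<Longrightarrow> a mod b = a - b"
  by (simp add: le_mod_geq)

lemma word_key: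
  assumes en: "even n" and n4: "4 \<le> n" and jm: "j < 2*n-2" and m_def: "m = 2*n-2"
  shows "hequiv n (rev (wword n j) @ wword n (Suc j mod m))
     (rev (wword n (Suc ((j+n-1) mod m) mod m)) @ wword n ((j+n-1) mod m))"
proof -
  have n1: "1 \<le> n" using n4 by simp
  obtain k where nk: "n = 2*k" using en by blast
  have cases: "j = n-2 \<or> j = 2*n-3 \<or> (j < n-2 \<and> even j \<and> j+4 \<le> n) \<or> (j < n-2 \<and> odd j)
     \<or> (n-1 \<le> j \<and> j < 2*n-3 \<and> even j) \<or> (n-1 \<le> j \<and> j < 2*n-3 \<and> odd j \<and> j + 5 \<le> 2*n)"
  proof (cases "even j")
    case True
    then obtain t where t: "j = 2*t" by blast
    have "j = n-2 \<or> (j < n-2 \<and> j+4 \<le> n) \<or> (n-1 \<le> j \<and> j < 2*n-3)"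
      using nk t n4 jm by arith
    then show ?thesis using True by blast
  next
    case False
    then obtain t where t: "j = 2*t+1" using oddE by blast
    have "j = 2*n-3 \<or> j < n-2 \<or> (n-1 \<le> j \<and> j < 2*n-3 \<and> j + 5 \<le> 2*n)"
      using nk t n4 jm by arith
    then show ?thesis using False by blast
  qed
  show ?thesis
  proof -
    {
      assume j: "j = n-2"
      have e: "Suc (2*n-3) = 2*n-2" using n4 by simp
      have i1: "Suc j mod m = n-1" "(j+n-1) mod m = 2*n-3" "Suc (2*n-3) mod m = 0"
        using j n4 unfolding m_def e by auto
      have "n - 2 = 2*(k-1)" using nk n4 by arith
      then have ev: "even (n-2)" by simp
      have w: "wword n j = vword (n-2)" "wword n (n-1) = [n,n]" "wword n (2*n-3) = [n] @ vword (n-2) @ [n]"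
        "wword n 0 = []"
      proof -
        show "wword n j = vword (n-2)" unfolding j by (rule wword_lo_even) (use n4 ev in auto)
        show "wword n (n-1) = [n,n]" using wword_hi_even[of n "n-1" 0] vword_0 by simp
        show "wword n (2*n-3) = [n] @ vword (n-2) @ [n]"
          by (rule wword_hi_even) (use n4 ev in arith)+
        show "wword n 0 = []" using wword_lo_even[of 0 n] vword_0 n4 by simp
      qed
      have ?thesis unfolding i1 w using rel_consequences(1)[OF n4] by simp
    }
    moreover {
      assume j: "j = 2*n-3"
      have i1: "Suc j mod m = 0" "(j+n-1) mod m = n-2" "Suc (n-2) mod m = n-1"
        using j n4 unfolding m_def by (auto simp: mod_sub)
      have "n - 2 = 2*(k-1)" using nk n4 by arith
      then have ev: "even (n-2)" by simp
      have w: "wword n j = [n] @ vword (n-2) @ [n]" "wword n (n-1) = [n,n]" "wword n (n-2) = vword (n-2)"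
        "wword n 0 = []"
      proof -
        show "wword n j = [n] @ vword (n-2) @ [n]" unfolding j
          by (rule wword_hi_even) (use n4 ev in arith)+
        show "wword n (n-1) = [n,n]" using wword_hi_even[of n "n-1" 0] vword_0 by simp
        show "wword n (n-2) = vword (n-2)" by (rule wword_lo_even) (use n4 ev in auto)
        show "wword n 0 = []" using wword_lo_even[of 0 n] vword_0 n4 by simp
      qed
      have ?thesis unfolding i1 w using rel_consequences(2)[OF n4] by simp
    }
    moreover {
      assume j: "j < n-2" "even j" "j+4 \<le> n"
      have i1: "Suc j mod m = Suc j" "(j+n-1) mod m = j+n-1" "Suc (j+n-1) mod m = j+n"
        using j n4 unfolding m_def by auto
      have w: "wword n j = vword j" "wword n (Suc j) = vword (Suc j) @ [n]"
        "wword n (j+n-1) = [n] @ vword j @ [n]" "wword n (j+n) = [n] @ (vword (Suc j) @ [n]) @ [n]"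
      proof -
        show "wword n j = vword j" by (rule wword_lo_even) (use j in arith)+
        show "wword n (Suc j) = vword (Suc j) @ [n]" by (rule wword_lo_odd) (use j in auto)
        show "wword n (j+n-1) = [n] @ vword j @ [n]" by (rule wword_hi_even) (use j n4 in arith)+
        show "wword n (j+n) = [n] @ (vword (Suc j) @ [n]) @ [n]" by (rule wword_hi_odd) (use j n4 in auto)
      qed
      define A where "A = rev (vword (Suc j))"
      define B where "B = vword j"
      have L: "rev (wword n j) @ wword n (Suc j mod m) = A @ B @ [n]"
        unfolding i1 w A_def B_def using K_word[of j] by simp
      have R: "rev (wword n (Suc ((j+n-1) mod m) mod m)) @ wword n ((j+n-1) mod m) = [n,n] @ A @ [n,n] @ B @ [n]"
        unfolding i1 w A_def B_def by simp
      have s1: "hequiv n ([] @ [n,n] @ (A @ [n,n] @ B @ [n])) ([] @ (A @ [n,n] @ B @ [n]))"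
        by (rule hcancel_nn[OF n1])
      have s2: "hequiv n (A @ [n,n] @ (B @ [n])) (A @ (B @ [n]))"
        by (rule hcancel_nn[OF n1])
      have ?thesis unfolding L R using s1 s2 by (simp only: append_Nil append_Nil2 append_assoc) (meson htr hsy)
    }
    moreover {
      assume j: "j < n-2" "odd j"
      have i1: "Suc j mod m = Suc j" "(j+n-1) mod m = j+n-1" "Suc (j+n-1) mod m = j+n"
        using j n4 unfolding m_def by auto
      have w: "wword n j = vword j @ [n]" "wword n (Suc j) = vword (Suc j)"
        "wword n (j+n-1) = [n] @ (vword j @ [n]) @ [n]" "wword n (j+n) = [n] @ vword (Suc j) @ [n]"
      proof -
        show "wword n j = vword j @ [n]" by (rule wword_lo_odd) (use j in arith)+
        show "wword n (Suc j) = vword (Suc j)" by (rule wword_lo_even) (use j in auto)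
        show "wword n (j+n-1) = [n] @ (vword j @ [n]) @ [n]" by (rule wword_hi_odd) (use j n4 in arith)+
        show "wword n (j+n) = [n] @ vword (Suc j) @ [n]" by (rule wword_hi_even) (use j n4 in auto)
      qed
      define A where "A = rev (vword (Suc j))"
      define B where "B = vword j"
      have L: "rev (wword n j) @ wword n (Suc j mod m) = [n] @ A @ B"
        unfolding i1 w A_def B_def using K_word[of j] by simp
      have R: "rev (wword n (Suc ((j+n-1) mod m) mod m)) @ wword n ((j+n-1) mod m) = [n] @ A @ [n,n] @ B @ [n,n]"
        unfolding i1 w A_def B_def by simp
      have s1: "hequiv n (([n] @ A) @ [n,n] @ (B @ [n,n])) (([n] @ A) @ (B @ [n,n]))"
        by (rule hcancel_nn[OF n1])
      have s2: "hequiv n (([n] @ A @ B) @ [n,n] @ []) (([n] @ A @ B) @ [])"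
        by (rule hcancel_nn[OF n1])
      have ?thesis unfolding L R using s1 s2 by (simp only: append_Nil append_Nil2 append_assoc) (meson htr hsy)
    }
    moreover {
      assume j: "n-1 \<le> j" "j < 2*n-3" "even j"
      define i where "i = j - (n-1)"
      obtain t where t: "j = 2*t" using j(3) by blast
      have "i = 2*(t-k)+1" "i < n-2" "j = i + (n-1)" using j nk n4 t unfolding i_def by arith+
      then have io: "odd i" "i < n-2" "j = i + (n-1)" by simp_all
      have i1: "Suc j mod m = Suc j" "(j+n-1) mod m = i" "Suc i mod m = Suc i"
        using j n4 io unfolding m_def by (auto simp: mod_sub)
      have w: "wword n j = [n] @ (vword i @ [n]) @ [n]" "wword n (Suc j) = [n] @ vword (Suc i) @ [n]"
        "wword n i = vword i @ [n]" "wword n (Suc i) = vword (Suc i)"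
      proof -
        show "wword n j = [n] @ (vword i @ [n]) @ [n]" by (rule wword_hi_odd) (use j io in arith)+
        show "wword n (Suc j) = [n] @ vword (Suc i) @ [n]" by (rule wword_hi_even) (use j io in auto)
        show "wword n i = vword i @ [n]" by (rule wword_lo_odd) (use io in arith)+
        show "wword n (Suc i) = vword (Suc i)" by (rule wword_lo_even) (use io in auto)
      qed
      define A where "A = rev (vword i)"
      define B where "B = vword (Suc i)"
      have L: "rev (wword n j) @ wword n (Suc j mod m) = [n,n] @ A @ [n,n] @ B @ [n]"
        unfolding i1 w A_def B_def by simp
      have R: "rev (wword n (Suc ((j+n-1) mod m) mod m)) @ wword n ((j+n-1) mod m) = A @ B @ [n]"
        unfolding i1 w A_def B_def using K_word[of i] by simp
      have s1: "hequiv n ([] @ [n,n] @ (A @ [n,n] @ B @ [n])) ([] @ (A @ [n,n] @ B @ [n]))"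
        by (rule hcancel_nn[OF n1])
      have s2: "hequiv n (A @ [n,n] @ (B @ [n])) (A @ (B @ [n]))"
        by (rule hcancel_nn[OF n1])
      have ?thesis unfolding L R using s1 s2 by (simp only: append_Nil append_Nil2 append_assoc) (meson htr hsy)
    }
    moreover {
      assume j: "n-1 \<le> j" "j < 2*n-3" "odd j" "j + 5 \<le> 2*n"
      define i where "i = j - (n-1)"
      obtain t where t: "j = 2*t+1" using j(3) oddE by blast
      have "i = 2*(t+1-k)" "i + 3 < n" "j = i + (n-1)" using j nk n4 t unfolding i_def by arith+
      then have io: "even i" "i + 3 < n" "j = i + (n-1)" by simp_all
      have i1: "Suc j mod m = Suc j" "(j+n-1) mod m = i" "Suc i mod m = Suc i"
        using j n4 io unfolding m_def by (auto simp: mod_sub)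
      have w: "wword n j = [n] @ vword i @ [n]" "wword n (Suc j) = [n] @ (vword (Suc i) @ [n]) @ [n]"
        "wword n i = vword i" "wword n (Suc i) = vword (Suc i) @ [n]"
      proof -
        show "wword n j = [n] @ vword i @ [n]" by (rule wword_hi_even) (use j io in arith)+
        show "wword n (Suc j) = [n] @ (vword (Suc i) @ [n]) @ [n]" by (rule wword_hi_odd) (use j io in auto)
        show "wword n i = vword i" by (rule wword_lo_even) (use io in arith)+
        show "wword n (Suc i) = vword (Suc i) @ [n]" by (rule wword_lo_odd) (use io in auto)
      qed
      define A where "A = rev (vword i)"
      define B where "B = vword (Suc i)"
      have L: "rev (wword n j) @ wword n (Suc j mod m) = [n] @ A @ [n,n] @ B @ [n,n]"
        unfolding i1 w A_def B_def by simp
      have R: "rev (wword n (Suc ((j+n-1) mod m) mod m)) @ wword n ((j+n-1) mod m) = [n] @ A @ B"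
        unfolding i1 w A_def B_def using K_word[of i] by simp
      have s1: "hequiv n (([n] @ A) @ [n,n] @ (B @ [n,n])) (([n] @ A) @ (B @ [n,n]))"
        by (rule hcancel_nn[OF n1])
      have s2: "hequiv n (([n] @ A @ B) @ [n,n] @ []) (([n] @ A @ B) @ [])"
        by (rule hcancel_nn[OF n1])
      have ?thesis unfolding L R using s1 s2 by (simp only: append_Nil append_Nil2 append_assoc) (meson htr hsy)
    }
    ultimately show ?thesis using cases by blast
  qed
qed

lemma tri_props:
  assumes "signature_pm J"
  shows "\<And>x0 x1 x2 x3. closedB J x0 \<Longrightarrow> closedB J x1 \<Longrightarrow> closedB J x2 \<Longrightarrow> closedB J x3 \<Longrightarrow>
     tri_area J x1 x2 x3 - tri_area J x0 x2 x3 + tri_area J x0 x1 x3 - tri_area J x0 x1 x2 = 0"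
    and "\<And>x y w. closedB J x \<Longrightarrow> closedB J y \<Longrightarrow> closedB J w \<Longrightarrow> tri_area J y x w = - tri_area J x y w"
    and "\<And>x w. closedB J x \<Longrightarrow> closedB J w \<Longrightarrow> tri_area J x x w = 0"
proof -
  obtain \<zeta> where zn: "\<And>x. closedB J x \<Longrightarrow> norm (\<zeta> x) \<le> 1"
    and ta: "\<And>a b c. closedB J a \<Longrightarrow> closedB J b \<Longrightarrow> closedB J c \<Longrightarrow>
        tri_area J a b c = 2 * Arg (Zt (\<zeta> a) (\<zeta> b) (\<zeta> c))"
    using tri_disc[OF assms] by blast
  show "tri_area J x1 x2 x3 - tri_area J x0 x2 x3 + tri_area J x0 x1 x3 - tri_area J x0 x1 x2 = 0"
    if "closedB J x0" "closedB J x1" "closedB J x2" "closedB J x3" for x0 x1 x2 x3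
    using disc_cocycle[OF zn[OF that(1)] zn[OF that(2)] zn[OF that(3)] zn[OF that(4)]] that
    by (simp add: ta)
  show "tri_area J y x w = - tri_area J x y w"
    if "closedB J x" "closedB J y" "closedB J w" for x y w
    using Arg_Zt_swap[OF zn[OF that(1)] zn[OF that(2)] zn[OF that(3)]] that by (simp add: ta)
  show "tri_area J x x w = 0" if "closedB J x" "closedB J w" for x w
    using Arg_Zt_diag[OF zn[OF that(1)]] that by (simp add: ta)
qed

lemma tri_unitary:
  assumes "unitary_J J U"
  shows "tri_area J (U *v a) (U *v b) (U *v c) = tri_area J a b c"
  using assms unfolding unitary_J_def tri_uniform by simp

lemma herm_scale2: "herm J (k1 *s a) (k2 *s b) = k1 * cnj k2 * herm J a b"
  by (simp add: herm_smult1 herm_smult2)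

lemma tri_scale:
  assumes "k1 \<noteq> 0" "k2 \<noteq> 0" "k3 \<noteq> 0"
  shows "tri_area J (k1 *s a) (k2 *s b) (k3 *s c) = tri_area J a b c"
proof -
  have sq: "\<And>z. z * cnj z = of_real ((norm z)\<^sup>2)" by (rule complex_norm_square[symmetric])
  define r where "r = (norm k1)\<^sup>2 * (norm k2)\<^sup>2 * (norm k3)\<^sup>2"
  have rpos: "0 < r" unfolding r_def using assms by simp
  have "- (herm J (k1 *s a) (k2 *s b) * herm J (k2 *s b) (k3 *s c) * herm J (k3 *s c) (k1 *s a))
     = (k1 * cnj k1) * (k2 * cnj k2) * (k3 * cnj k3) * (- (herm J a b * herm J b c * herm J c a))"
    unfolding herm_scale2 by (simp add: mult_ac)
  also have "\<dots> = of_real r * (- (herm J a b * herm J b c * herm J c a))"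
    unfolding sq r_def by simp
  finally have e: "- (herm J (k1 *s a) (k2 *s b) * herm J (k2 *s b) (k3 *s c) * herm J (k3 *s c) (k1 *s a))
     = of_real r * (- (herm J a b * herm J b c * herm J c a))" .
  show ?thesis unfolding tri_uniform by (simp only: e Arg_times_of_real[OF rpos])
qed

lemma closedB_unitary:
  assumes "signature_pm J" "unitary_J J U" "closedB J x"
  shows "closedB J (U *v x)"
proof -
  have nd: "\<And>x. (\<forall>y. herm J x y = 0) \<Longrightarrow> x = 0" using herm_facts(2)[OF assms(1)] by blast
  have u: "\<And>a b. herm J (U *v a) (U *v b) = herm J a b" using assms(2) unfolding unitary_J_def by blast
  have "U *v x \<noteq> 0"
  proof
    assume "U *v x = 0"
    then have "\<forall>y. herm J x y = 0" using u by (metis herm_zero1)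
    then show False using nd assms(3) unfolding closedB_def by blast
  qed
  then show ?thesis using assms(3) u unfolding closedB_def by simp
qed

lemma mat_prop_apply:
  assumes "mat_prop A B"
  shows "\<exists>k. k \<noteq> 0 \<and> (\<forall>x. A *v x = k *s (B *v x))"
proof -
  obtain k where k: "k \<noteq> 0" "\<forall>i j. A$i$j = k * B$i$j" using assms unfolding mat_prop_def by blast
  have "\<forall>x. A *v x = k *s (B *v x)"
    using k(2) by (simp add: vec_eq_iff matrix_vector_mult_def sum_distrib_left mult.assoc)
  then show ?thesis using k(1) by blast
qed

lemma mat_prop_sym: "mat_prop A B \<Longrightarrow> mat_prop B A"
proof -
  assume "mat_prop A B"
  then obtain k where k: "k \<noteq> 0" "\<forall>i j. A$i$j = k * B$i$j" unfolding mat_prop_def by blast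
  have "\<forall>i j. B$i$j = inverse k * A$i$j" using k by (simp add: field_simps)
  then show "mat_prop B A" unfolding mat_prop_def using k(1) by (intro exI[of _ "inverse k"]) simp
qed

lemma mat_prop_trans: "mat_prop A B \<Longrightarrow> mat_prop B C \<Longrightarrow> mat_prop A C"
proof -
  assume "mat_prop A B" "mat_prop B C"
  then obtain k l where "k \<noteq> 0" "\<forall>i j. A$i$j = k * B$i$j" "l \<noteq> 0" "\<forall>i j. B$i$j = l * C$i$j"
    unfolding mat_prop_def by blast
  then show "mat_prop A C" unfolding mat_prop_def by (intro exI[of _ "k*l"]) (simp add: mult.assoc)
qed

lemma gword_append: "gword n u \<Longrightarrow> gword n v \<Longrightarrow> gword n (u @ v)"
  unfolding gword_def by auto
lemma gword_rev: "gword n u \<Longrightarrow> gword n (rev u)"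
  unfolding gword_def by auto

lemma gword_wbase: "i \<le> n \<Longrightarrow> 1 \<le> n \<Longrightarrow> gword n (wbase n i)"
proof -
  assume i: "i \<le> n" and n1: "1 \<le> n"
  have l: "length (wbase n i) = i + (if odd i then 1 else 0)" unfolding wbase_def vword_def by simp
  have "even (length (wbase n i))" unfolding l by (cases "even i") auto
  moreover have "set (wbase n i) \<subseteq> {1..n}" using i n1 unfolding wbase_def by (auto simp: set_vword)
  ultimately show ?thesis unfolding gword_def by blast
qed

lemma gword_wword:
  assumes "2 \<le> n" "j < 2*n-2"
  shows "gword n (wword n j)"
proof (cases "j < n - 1")
  case True
  then show ?thesis using gword_wbase[of j n] assms by (simp add: wword_lo True)
next
  case False
  then have "j - (n-1) \<le> n" using assms by arith
  then have g: "gword n (wbase n (j - (n-1)))" by (rule gword_wbase) (use assms in simp)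
  have "gword n ([n] @ wbase n (j - (n-1)) @ [n])" using g assms unfolding gword_def by auto
  then show ?thesis using False by (simp add: wword_hi)
qed

lemma rho_props:
  assumes "proj_hom J n \<rho>"
  shows "\<And>w. gword n w \<Longrightarrow> unitary_J J (\<rho> w)"
    and "\<And>u v. gword n u \<Longrightarrow> gword n v \<Longrightarrow> mat_prop (\<rho> (u @ v)) (\<rho> u ** \<rho> v)"
    and "\<And>u v. gword n u \<Longrightarrow> gword n v \<Longrightarrow> hequiv n u v \<Longrightarrow> mat_prop (\<rho> u) (\<rho> v)"
  using assms unfolding proj_hom_def by blast+

lemma key_geom:
  assumes sig: "signature_pm J" and ph: "proj_hom J n \<rho>" and en: "even n" and n4: "4 \<le> n"
    and jm: "j < m" and m_def: "m = 2*n-2"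
  shows "tri_area J (\<rho> (wword n j) *v a) (\<rho> (wword n (Suc j mod m)) *v b) (\<rho> (wword n j) *v a') =
         tri_area J (\<rho> (wword n (Suc ((j+n-1) mod m) mod m)) *v a) (\<rho> (wword n ((j+n-1) mod m)) *v b)
                    (\<rho> (wword n (Suc ((j+n-1) mod m) mod m)) *v a')"
proof -
  have m0: "0 < m" using m_def n4 by simp
  define wj where "wj = wword n j"
  define w1 where "w1 = wword n (Suc j mod m)"
  define wj' where "wj' = wword n (Suc ((j+n-1) mod m) mod m)"
  define ws where "ws = wword n ((j+n-1) mod m)"
  have n2: "2 \<le> n" using n4 by simp
  have gw: "gword n wj" "gword n w1" "gword n wj'" "gword n ws"
    unfolding wj_def w1_def wj'_def ws_def using gword_wword[OF n2] jm m0 m_def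
    by (metis mod_less_divisor)+
  define g where "g = wj' @ rev wj"
  have gg: "gword n g" unfolding g_def using gw by (simp add: gword_append gword_rev)
  have sw: "set (rev wj) \<subseteq> {1..n}" "set wj' \<subseteq> {1..n}" using gw unfolding gword_def by auto
  have E1: "hequiv n (g @ wj) wj'"
    using hcancel_word[OF sw(1), of wj' "[]"] unfolding g_def by simp
  have WK: "hequiv n (rev wj @ w1) (rev wj' @ ws)"
    unfolding wj_def w1_def wj'_def ws_def by (rule word_key[OF en n4 _ m_def]) (use jm m_def in simp)
  have E2a: "hequiv n (wj' @ (rev wj @ w1) @ []) (wj' @ (rev wj' @ ws) @ [])" using hcong[OF WK] .
  have E2b: "hequiv n ([] @ wj' @ rev wj' @ ws) ([] @ ws)" using hcancel_word[OF sw(2)] .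
  have E2: "hequiv n (g @ w1) ws" using E2a E2b unfolding g_def by (simp add: htr)
  note R = rho_props[OF ph]
  have M1: "mat_prop (\<rho> wj') (\<rho> g ** \<rho> wj)"
    using R(2)[OF gg gw(1)] R(3)[OF gword_append[OF gg gw(1)] gw(3) E1]
    by (meson mat_prop_sym mat_prop_trans)
  have M2: "mat_prop (\<rho> ws) (\<rho> g ** \<rho> w1)"
    using R(2)[OF gg gw(2)] R(3)[OF gword_append[OF gg gw(2)] gw(4) E2]
    by (meson mat_prop_sym mat_prop_trans)
  obtain k1 where k1: "k1 \<noteq> 0" "\<And>x. \<rho> wj' *v x = k1 *s ((\<rho> g ** \<rho> wj) *v x)"
    using mat_prop_apply[OF M1] by blast
  obtain k2 where k2: "k2 \<noteq> 0" "\<And>x. \<rho> ws *v x = k2 *s ((\<rho> g ** \<rho> w1) *v x)"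
    using mat_prop_apply[OF M2] by blast
  have U: "unitary_J J (\<rho> g)" using R(1)[OF gg] .
  have "tri_area J (\<rho> wj' *v a) (\<rho> ws *v b) (\<rho> wj' *v a') =
        tri_area J (k1 *s (\<rho> g *v (\<rho> wj *v a))) (k2 *s (\<rho> g *v (\<rho> w1 *v b))) (k1 *s (\<rho> g *v (\<rho> wj *v a')))"
    unfolding k1 k2 by (simp add: matrix_vector_mul_assoc)
  also have "\<dots> = tri_area J (\<rho> g *v (\<rho> wj *v a)) (\<rho> g *v (\<rho> w1 *v b)) (\<rho> g *v (\<rho> wj *v a'))"
    using k1(1) k2(1) k1(1) by (rule tri_scale)
  also have "\<dots> = tri_area J (\<rho> wj *v a) (\<rho> w1 *v b) (\<rho> wj *v a')"
    using U by (rule tri_unitary)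
  finally show ?thesis unfolding wj_def w1_def wj'_def ws_def by simp
qed

lemma sum_rot1:
  assumes "0 < (m::nat)"
  shows "(\<Sum>k<m. f (Suc k mod m)) = (\<Sum>k<m. (f k :: real))"
proof -
  obtain m' where m: "m = Suc m'" using assms by (metis gr0_implies_Suc)
  have "(\<Sum>k<Suc m'. f (Suc k mod Suc m')) = (\<Sum>k<m'. f (Suc k mod Suc m')) + f (Suc m' mod Suc m')"
    by simp
  also have "(\<Sum>k<m'. f (Suc k mod Suc m')) = (\<Sum>k<m'. f (Suc k))"
    by (intro sum.cong refl) simp
  also have "f (Suc m' mod Suc m') = f 0" by simp
  also have "(\<Sum>k<m'. f (Suc k)) + f 0 = (\<Sum>k<Suc m'. f k)"
    by (subst sum.lessThan_Suc_shift) simp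
  finally show ?thesis unfolding m .
qed

lemma sum_rot:
  assumes "0 < (m::nat)"
  shows "(\<Sum>k<m. f ((k + r) mod m)) = (\<Sum>k<m. (f k :: real))"
proof (induction r)
  case 0
  show ?case by (intro sum.cong refl) simp
next
  case (Suc r)
  have "(\<Sum>k<m. f ((k + Suc r) mod m)) = (\<Sum>k<m. (\<lambda>i. f ((i + r) mod m)) (Suc k mod m))"
    by (intro sum.cong refl) (simp add: mod_add_left_eq)
  also have "\<dots> = (\<Sum>k<m. f ((k + r) mod m))" by (rule sum_rot1[OF assms])
  finally show ?case using Suc by simp
qed

lemma sum_pair_zero:
  assumes "0 < (m::nat)" "\<And>k. k < m \<Longrightarrow> F k + F ((k + r) mod m) = (0::real)"
  shows "(\<Sum>k<m. F k) = 0"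
proof -
  have "(\<Sum>k<m. F k) + (\<Sum>k<m. F k) = (\<Sum>k<m. F k) + (\<Sum>k<m. F ((k + r) mod m))"
    using sum_rot[OF assms(1)] by simp
  also have "\<dots> = (\<Sum>k<m. F k + F ((k + r) mod m))" by (simp add: sum.distrib)
  also have "\<dots> = 0" using assms(2) by simp
  finally show ?thesis by simp
qed

lemma area_c_indep:
  assumes sig: "signature_pm J" and m: "0 < m" and P: "\<And>k. k < m \<Longrightarrow> closedB J (P k)"
    and c: "closedB J c" and c': "closedB J c'"
  shows "area_poly J c P m = area_poly J c' P m"
proof -
  note T = tri_props[OF sig]
  have "area_poly J c P m - area_poly J c' P m =
     (\<Sum>k<m. tri_area J c c' (P (Suc k mod m)) - tri_area J c c' (P k))"
    unfolding area_poly_def sum_subtractf[symmetric]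
  proof (intro sum.cong refl)
    fix k assume "k \<in> {..<m}"
    then have a: "closedB J (P k)" "closedB J (P (Suc k mod m))" using P m by auto
    show "tri_area J c (P k) (P (Suc k mod m)) - tri_area J c' (P k) (P (Suc k mod m)) =
      tri_area J c c' (P (Suc k mod m)) - tri_area J c c' (P k)"
      using T(1)[OF c c' a(1) a(2)] by linarith
  qed
  also have "\<dots> = 0" unfolding sum_subtractf using sum_rot1[OF m] by simp
  finally show ?thesis by simp
qed

lemma area_diff:
  assumes sig: "signature_pm J" and m: "0 < m" and P: "\<And>k. k < m \<Longrightarrow> closedB J (P k)"
    and P': "\<And>k. k < m \<Longrightarrow> closedB J (P' k)" and c: "closedB J c"
  shows "area_poly J c P m - area_poly J c P' m =
    (\<Sum>k<m. tri_area J (P k) (P (Suc k mod m)) (P' (Suc k mod m)) + tri_area J (P k) (P' (Suc k mod m)) (P' k))"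
proof -
  note T = tri_props[OF sig]
  have "area_poly J c P m - area_poly J c P' m =
     (\<Sum>k<m. (tri_area J (P k) (P (Suc k mod m)) (P' (Suc k mod m)) + tri_area J (P k) (P' (Suc k mod m)) (P' k))
       + (tri_area J c (P k) (P' k) - tri_area J c (P (Suc k mod m)) (P' (Suc k mod m))))"
    unfolding area_poly_def sum_subtractf[symmetric]
  proof (intro sum.cong refl)
    fix k assume "k \<in> {..<m}"
    then have a: "closedB J (P k)" "closedB J (P (Suc k mod m))" "closedB J (P' k)" "closedB J (P' (Suc k mod m))"
      using P P' m by auto
    have c1: "tri_area J (P k) (P (Suc k mod m)) (P' (Suc k mod m)) - tri_area J c (P (Suc k mod m)) (P' (Suc k mod m))
       + tri_area J c (P k) (P' (Suc k mod m)) - tri_area J c (P k) (P (Suc k mod m)) = 0"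
      using T(1)[OF c a(1) a(2) a(4)] .
    have c2: "tri_area J (P k) (P' (Suc k mod m)) (P' k) - tri_area J c (P' (Suc k mod m)) (P' k)
       + tri_area J c (P k) (P' k) - tri_area J c (P k) (P' (Suc k mod m)) = 0"
      using T(1)[OF c a(1) a(4) a(3)] .
    have s: "tri_area J c (P' (Suc k mod m)) (P' k) = - tri_area J c (P' k) (P' (Suc k mod m))"
    proof -
      have "tri_area J c (P' (Suc k mod m)) (P' k) = tri_area J (P' (Suc k mod m)) (P' k) c"
        using tri_cyc by metis
      also have "\<dots> = - tri_area J (P' k) (P' (Suc k mod m)) c" using T(2)[OF a(3) a(4) c] .
      also have "tri_area J (P' k) (P' (Suc k mod m)) c = tri_area J c (P' k) (P' (Suc k mod m))"
        using tri_cyc by metis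
      finally show ?thesis .
    qed
    show "tri_area J c (P k) (P (Suc k mod m)) - tri_area J c (P' k) (P' (Suc k mod m)) =
      (tri_area J (P k) (P (Suc k mod m)) (P' (Suc k mod m)) + tri_area J (P k) (P' (Suc k mod m)) (P' k))
       + (tri_area J c (P k) (P' k) - tri_area J c (P (Suc k mod m)) (P' (Suc k mod m)))"
      using c1 c2 s by linarith
  qed
  also have "\<dots> = (\<Sum>k<m. tri_area J (P k) (P (Suc k mod m)) (P' (Suc k mod m)) + tri_area J (P k) (P' (Suc k mod m)) (P' k))
     + ((\<Sum>k<m. tri_area J c (P k) (P' k)) - (\<Sum>k<m. tri_area J c (P (Suc k mod m)) (P' (Suc k mod m))))"
    by (simp add: sum.distrib sum_subtractf)
  also have "(\<Sum>k<m. tri_area J c (P (Suc k mod m)) (P' (Suc k mod m))) = (\<Sum>k<m. tri_area J c (P k) (P' k))"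
    using sum_rot1[OF m, of "\<lambda>k. tri_area J c (P k) (P' k)"] by simp
  finally show ?thesis by simp
qed

lemma even_mod_evenm: "even (m::nat) \<Longrightarrow> even (x mod m) \<longleftrightarrow> even x"
proof -
  assume "even m"
  then have "even (m * (x div m))" by simp
  moreover have "x = m * (x div m) + x mod m" by simp
  ultimately show ?thesis by (metis even_add)
qed

lemma change_class:
  assumes sig: "signature_pm J" and ph: "proj_hom J n \<rho>" and en: "even n" and n4: "4 \<le> n"
    and m_def: "m = 2*n-2"
    and u: "closedB J u" and u': "closedB J u'" and v: "closedB J v" and c: "closedB J c"
  shows "area_poly J c (\<lambda>j. \<rho> (wword n j) *v (if even j = e then u else v)) m =
         area_poly J c (\<lambda>j. \<rho> (wword n j) *v (if even j = e then u' else v)) m"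
proof -
  have m0: "0 < m" using m_def n4 by simp
  have em: "even m" using m_def en by simp
  have n2: "2 \<le> n" using n4 by simp
  define W where "W j = \<rho> (wword n j)" for j
  define P where "P j = W j *v (if even j = e then u else v)" for j
  define P' where "P' j = W j *v (if even j = e then u' else v)" for j
  note T = tri_props[OF sig]
  have clW: "closedB J (W k *v x)" if "k < m" "closedB J x" for k x
    unfolding W_def
    by (rule closedB_unitary[OF sig rho_props(1)[OF ph gword_wword[OF n2]] that(2)]) (use that m_def in simp)
  have clP: "closedB J (P k)" "closedB J (P' k)" if "k < m" for k
    unfolding P_def P'_def using clW[OF that] u u' v by auto
  define s where "s k = (k + (n - 1)) mod m" for k
  have sm: "s k < m" for k unfolding s_def using m0 by simp
  have pa: "even (Suc k mod m) \<longleftrightarrow> \<not> even k" if "k < m" for k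
  proof (cases "Suc k < m")
    case True then show ?thesis by simp
  next
    case False
    then have sk: "Suc k = m" using that by simp
    then have z: "Suc k mod m = 0" by simp
    have "odd k" using sk em by (metis even_Suc)
    then show ?thesis using z by simp
  qed
  have pb: "even (s k) \<longleftrightarrow> \<not> even k" for k
  proof -
    have "odd (n - 1)" using en n4 by simp
    then show ?thesis unfolding s_def even_mod_evenm[OF em] by simp
  qed
  have pc: "s (s k) = k" if "k < m" for k
  proof -
    have "s (s k) = (k + (n - 1) + (n - 1)) mod m" unfolding s_def by (simp add: mod_add_left_eq)
    also have "k + (n - 1) + (n - 1) = k + m" using m_def n4 by simp
    finally show ?thesis using that by simp
  qed
  have sk: "(k + n - 1) mod m = s k" for k unfolding s_def using n4 by simp
  define F where "F k = tri_area J (P k) (P (Suc k mod m)) (P' (Suc k mod m)) + tri_area J (P k) (P' (Suc k mod m)) (P' k)" for k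
  have diag_r: "tri_area J x y y = 0" if "closedB J x" "closedB J y" for x y
    using T(3)[OF that(2) that(1)] tri_cyc[of J y y x] by simp
  have diag_m: "tri_area J x y x = 0" if "closedB J x" "closedB J y" for x y
    using T(3)[OF that(1) that(2)] tri_cyc[of J x y x] by simp
  have Fin: "F k = tri_area J (W k *v u) (W (Suc k mod m) *v v) (W k *v u')" if "k < m" "even k = e" for k
  proof -
    have e1: "even (Suc k mod m) \<noteq> e" using pa[OF that(1)] that(2) by simp
    have "P (Suc k mod m) = P' (Suc k mod m)" unfolding P_def P'_def using e1 by simp
    then have "F k = tri_area J (P k) (P (Suc k mod m)) (P (Suc k mod m)) + tri_area J (P k) (P (Suc k mod m)) (P' k)"
      unfolding F_def by simp
    also have "tri_area J (P k) (P (Suc k mod m)) (P (Suc k mod m)) = 0"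
      using diag_r clP that(1) m0 by simp
    finally show ?thesis unfolding P_def P'_def using that(2) e1 by simp
  qed
  have Fout: "F k = tri_area J (W k *v v) (W (Suc k mod m) *v u) (W (Suc k mod m) *v u')" if "k < m" "even k \<noteq> e" for k
  proof -
    have e1: "even (Suc k mod m) = e" using pa[OF that(1)] that(2) by simp
    have "P k = P' k" unfolding P_def P'_def using that(2) by simp
    then have "F k = tri_area J (P k) (P (Suc k mod m)) (P' (Suc k mod m)) + tri_area J (P k) (P' (Suc k mod m)) (P k)"
      unfolding F_def by simp
    also have "tri_area J (P k) (P' (Suc k mod m)) (P k) = 0"
      using diag_m clP that(1) m0 by simp
    finally show ?thesis unfolding P_def P'_def using that(2) e1 by simp
  qed
  have pin: "F k + F (s k) = 0" if "k < m" "even k = e" for k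
  proof -
    define t where "t = Suc (s k) mod m"
    have es: "even (s k) \<noteq> e" using pb that(2) by simp
    have tm: "t < m" unfolding t_def using m0 by simp
    have K: "tri_area J (W k *v u) (W (Suc k mod m) *v v) (W k *v u') =
             tri_area J (W t *v u) (W (s k) *v v) (W t *v u')"
      using key_geom[OF sig ph en n4 that(1) m_def, of u v u'] unfolding W_def t_def sk .
    have S: "tri_area J (W t *v u) (W (s k) *v v) (W t *v u') = - tri_area J (W (s k) *v v) (W t *v u) (W t *v u')"
      using T(2)[OF clW[OF sm v] clW[OF tm u] clW[OF tm u']] by simp
    have "F (s k) = tri_area J (W (s k) *v v) (W t *v u) (W t *v u')"
      using Fout[OF sm es] unfolding t_def .
    then show ?thesis using Fin[OF that] K S by simp
  qed
  have pall: "F k + F ((k + (n - 1)) mod m) = 0" if "k < m" for k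
  proof (cases "even k = e")
    case True then show ?thesis using pin[OF that True] unfolding s_def by simp
  next
    case False
    then have "even (s k) = e" using pb by simp
    then have "F (s k) + F (s (s k)) = 0" using pin[OF sm] by blast
    then show ?thesis using pc[OF that] unfolding s_def by simp
  qed
  have "(\<Sum>k<m. F k) = 0" by (rule sum_pair_zero[of m F "n - 1", OF m0 pall])
  moreover have "area_poly J c P m - area_poly J c P' m = (\<Sum>k<m. F k)"
    unfolding F_def by (rule area_diff[OF sig m0 clP(1) clP(2) c])
  ultimately show ?thesis unfolding P_def P'_def W_def by simp
qed

theorem lemma5p6:
  fixes J :: "complex^2^2" and n :: nat and \<rho> :: "nat list \<Rightarrow> complex^2^2"
    and p q p' q' c c' :: "complex^2"
  assumes "signature_pm J"
    and "n \<ge> 6" and "even n"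
    and "proj_hom J n \<rho>"
    and "closedB J p" and "closedB J q" and "closedB J p'" and "closedB J q'"
    and "closedB J c" and "closedB J c'"
  shows "area_n J n \<rho> c p q = area_n J n \<rho> c' p' q'"
proof -
  note sig = assms(1) and en = assms(3) and ph = assms(4)
  have n4: "4 \<le> n" using assms(2) by simp
  define m where "m = 2*n-2"
  have m0: "0 < m" using m_def n4 by simp
  have n2: "2 \<le> n" using n4 by simp
  have e1: "(\<lambda>j. \<rho> (wword n j) *v (if even j then p else q)) =
            (\<lambda>j. \<rho> (wword n j) *v (if even j = True then p else q))" by simp
  have e2: "(\<lambda>j. \<rho> (wword n j) *v (if even j then p' else q)) =
            (\<lambda>j. \<rho> (wword n j) *v (if even j = False then q else p'))" by auto
  have e3: "(\<lambda>j. \<rho> (wword n j) *v (if even j then p' else q')) =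
            (\<lambda>j. \<rho> (wword n j) *v (if even j = False then q' else p'))" by auto
  have "area_n J n \<rho> c p q = area_poly J c (\<lambda>j. \<rho> (wword n j) *v (if even j then p else q)) m"
    unfolding area_n_def m_def ..
  also have "\<dots> = area_poly J c (\<lambda>j. \<rho> (wword n j) *v (if even j then p' else q)) m"
    unfolding e1 using change_class[OF sig ph en n4 m_def assms(5) assms(7) assms(6) assms(9), of True]
    by simp
  also have "\<dots> = area_poly J c (\<lambda>j. \<rho> (wword n j) *v (if even j then p' else q')) m"
    unfolding e2 e3 using change_class[OF sig ph en n4 m_def assms(6) assms(8) assms(7) assms(9), of False]
    by simp
  also have "\<dots> = area_poly J c' (\<lambda>j. \<rho> (wword n j) *v (if even j then p' else q')) m"
  proof (rule area_c_indep[OF sig m0 _ assms(9) assms(10)])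
    fix k assume "k < m"
    then show "closedB J (\<rho> (wword n k) *v (if even k then p' else q'))"
      using closedB_unitary[OF sig rho_props(1)[OF ph gword_wword[OF n2]]] assms(7,8) m_def
      by simp
  qed
  also have "\<dots> = area_n J n \<rho> c' p' q'" unfolding area_n_def m_def ..
  finally show ?thesis .
qed

end
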